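(* Let $H$ be a real Hilbert space, $C\subseteq H$ nonempty, closed and convex, and $F:H\to H$ an operator such that (A1) $S_D\neq\emptyset$; (A2) $F$ is quasimonotone; (A3) $F$ is uniformly continuous on $H$. Let $\{z_n\},\{w_n\}$ be the sequences generated by Algorithm 3.1 (with $\epsilon=0$), and assume $z_n\neq w_n$ for all $n$. Then: (i) for every $x^\ell\in S_D$, $\lim_{n\to\infty}\|z_n-x^\ell\|$ exists; (ii) $\lim_{n\to\infty}\|z_n-w_n\|=0$ and $\lim_{n\to\infty}\|z_{n+1}-z_n\|=0$.
   Context: $P_C$ denotes the metric projection onto $C$. $S$ is the solution set of the variational inequality: $x\in C$ with $\langle F(x),w-x\rangle\ge 0$ for all $w\in C$. $S_D$ is the set of $z\in C$ with $\langle F(v),v-z\rangle\ge0$ for all $v\in C$. $F$ is quasimonotone if $\langle F(w),z-w\rangle>0$ implies $\langle F(z),z-w\rangle\ge0$ for all $w,z\in H$. Algorithm 3.1 (with $\epsilon=0$): fix $\mu\in(0,1)$, a sequence $\{\xi_n\}\subset[0,\infty)$ with $\sum_{n}\xi_n<\infty$, $z_1\in H$ and $\lambda_1>0$. For $n=1,2,\dots$: $w_n=P_C(z_n-\lambda_nF(z_n))$; $z_{n+1}=w_n+\lambda_n(F(z_n)-F(w_n))$; $\lambda_{n+1}=\min\{\frac{\mu\|z_n-w_n\|}{\|F(z_n)-F(w_n)\|},\lambda_n+\xi_n\}$ if $F(z_n)\neq F(w_n)$, and $\lambda_{n+1}=\lambda_n+\xi_n$ otherwise. (If $z_n=w_n$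 the algorithm would stop; here it is assumed this never happens.) *)

theory Defs
  imports "HOL-Analysis.Analysis"
begin

text \<open>Metric projection onto C in a real inner product space (same definition as the
library's closest_point, which however is restricted to heine_borel spaces).\<close>
definition metric_proj :: "'a::real_inner set \<Rightarrow> 'a \<Rightarrow> 'a" where
  "metric_proj C x = (SOME p. p \<in> C \<and> (\<forall>y\<in>C. dist x p \<le> dist x y))"

definition VI_sol :: "'a::real_inner set \<Rightarrow> ('a \<Rightarrow> 'a) \<Rightarrow> 'a set" where
  "VI_sol C F = {x \<in> C. \<forall>w\<in>C. inner (F x) (w - x) \<ge> 0}"

definition dual_sol :: "'a::real_inner set \<Rightarrow> ('a \<Rightarrow> 'a) \<Rightarrow> 'a set" where
  "dual_sol C F = {z \<in> C. \<forall>v\<in>C. inner (F v) (v - z) \<ge> 0}"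

definition quasimonotone :: "('a::real_inner \<Rightarrow> 'a) \<Rightarrow> bool" where
  "quasimonotone F \<longleftrightarrow> (\<forall>w z. inner (F w) (z - w) > 0 \<longrightarrow> inner (F z) (z - w) \<ge> 0)"

end

theory Submission
  imports Defs
begin


lemma fejer_alg:
  fixes u v p a b :: "'a::real_inner"
  assumes h1: "inner ((u - l *\<^sub>R a) - v) (p - v) \<le> 0"
    and h2: "inner b (v - p) \<ge> 0" and l: "l \<ge> 0"
  shows "(norm (v + l *\<^sub>R (a - b) - p))\<^sup>2 \<le> (norm (u - p))\<^sup>2 - (norm (u - v))\<^sup>2 + (l * norm (a - b))\<^sup>2"
proof -
  have e0: "v + l *\<^sub>R (a - b) - p = (v - p) + l *\<^sub>R (a - b)" by simp
  have e1: "(norm (v + l *\<^sub>R (a - b) - p))\<^sup>2 = (norm (v - p))\<^sup>2 + 2 * l * inner (v - p) (a - b) + (l * norm (a - b))\<^sup>2"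
    unfolding e0 power_mult_distrib power2_norm_eq_inner
    by (simp add: inner_add_left inner_add_right inner_commute power2_eq_square algebra_simps)
  have e2: "(norm (u - p))\<^sup>2 - (norm (u - v))\<^sup>2 = (norm (v - p))\<^sup>2 + 2 * inner (u - v) (v - p)"
    by (simp add: power2_norm_eq_inner inner_diff_left inner_diff_right inner_add_left inner_add_right inner_commute algebra_simps)
  have e3: "inner (u - v) (v - p) \<ge> l * inner a (v - p)"
    using h1 by (simp add: inner_diff_left inner_diff_right inner_commute algebra_simps)
  have e4: "l * inner (v - p) (a - b) = l * inner a (v - p) - l * inner b (v - p)"
    by (simp add: inner_diff_left inner_diff_right inner_commute algebra_simps)
  have "l * inner b (v - p) \<ge> 0" using h2 l by simp
  then show ?thesis using e1 e2 e3 e4 by linarith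
qed

lemma ucont_linear_bound:
  fixes F :: "'a::real_normed_vector \<Rightarrow> 'b::real_normed_vector"
  assumes "uniformly_continuous_on UNIV F"
  shows "\<exists>A B. A \<ge> 0 \<and> B > 0 \<and> (\<forall>x y. norm (F x - F y) \<le> A + B * norm (x - y))"
proof -
  obtain s where s: "s > 0" "\<And>x y. dist x y < s \<Longrightarrow> dist (F x) (F y) < 1"
    using assms unfolding isUCont_def by (meson zero_less_one)
  have ind: "\<forall>x y. norm (x - y) \<le> real k * (s/2) \<longrightarrow> norm (F x - F y) \<le> real k" for k
  proof (induction k)
    case 0
    then show ?case by simp
  next
    case (Suc k)
    show ?case
    proof (intro allI impI)
      fix x y :: 'a
      assume H: "norm (x - y) \<le> real (Suc k) * (s/2)"
      define y' where "y' = x + (real k / real (Suc k)) *\<^sub>R (y - x)"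
      have "x - y' = - ((real k / real (Suc k)) *\<^sub>R (y - x))" by (simp add: y'_def)
      then have n1: "norm (x - y') = (real k / real (Suc k)) * norm (x - y)"
        by (simp add: norm_minus_commute)
      have "y' - y = (1 - real k / real (Suc k)) *\<^sub>R (x - y)"
        by (simp add: y'_def algebra_simps)
      moreover have "1 - real k / real (Suc k) = 1 / real (Suc k)"
        by (simp add: field_simps)
      ultimately have n2: "norm (y' - y) = norm (x - y) / real (Suc k)"
        by simp
      have "(real k / real (Suc k)) * norm (x - y) \<le> (real k / real (Suc k)) * (real (Suc k) * (s/2))"
        using H by (intro mult_left_mono) auto
      then have "norm (x - y') \<le> real k * (s/2)"
        unfolding n1 by simp
      then have a1: "norm (F x - F y') \<le> real k" using Suc by blast
      have "norm (y' - y) \<le> s/2" using H unfolding n2 by (simp add: field_simps)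
      then have "dist y' y < s" using s(1) by (simp add: dist_norm)
      then have a2: "norm (F y' - F y) \<le> 1" using s(2) by (simp add: dist_norm less_imp_le)
      have "norm (F x - F y) \<le> norm (F x - F y') + norm (F y' - F y)"
        by (metis diff_add_cancel add_diff_eq norm_triangle_ineq diff_diff_eq2)
      then show "norm (F x - F y) \<le> real (Suc k)" using a1 a2 by simp
    qed
  qed
  show ?thesis
  proof (intro exI conjI allI)
    show "(1::real) \<ge> 0" by simp
    show "2 / s > 0" using s by simp
    fix x y :: 'a
    define k where "k = nat \<lceil>norm (x - y) / (s/2)\<rceil>"
    have k1: "norm (x - y) / (s/2) \<le> real k" unfolding k_def by linarith
    have nn: "0 \<le> norm (x - y) / (s/2)" using s by simp
    have "real k = real_of_int \<lceil>norm (x - y) / (s/2)\<rceil>" unfolding k_def using nn by simp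
    then have k2: "real k \<le> norm (x - y) / (s/2) + 1"
      using of_int_ceiling_le_add_one[of "norm (x - y) / (s/2)"] by linarith
    have "norm (x - y) \<le> real k * (s/2)" using k1 s by (simp add: field_simps)
    then have "norm (F x - F y) \<le> real k" using ind by blast
    also have "\<dots> \<le> 1 + 2 / s * norm (x - y)" using k2 s by (simp add: field_simps)
    finally show "norm (F x - F y) \<le> 1 + 2 / s * norm (x - y)" .
  qed
qed



lemma parallelogram:
  fixes a b :: "'a::real_inner"
  shows "(norm (a + b))\<^sup>2 + (norm (a - b))\<^sup>2 = 2 * (norm a)\<^sup>2 + 2 * (norm b)\<^sup>2"
  unfolding power2_norm_eq_inner
  by (simp add: inner_add_left inner_add_right inner_diff_left inner_diff_right inner_commute algebra_simps)

lemma proj_exists: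
  fixes C :: "'a::{real_inner,complete_space} set"
  assumes C: "C \<noteq> {}" "closed C" "convex C"
  shows "\<exists>p\<in>C. \<forall>y\<in>C. dist x p \<le> dist x y"
proof -
  define d where "d = infdist x C"
  have d0: "d \<ge> 0" unfolding d_def by (rule infdist_nonneg)
  have dle: "d \<le> dist x y" if "y \<in> C" for y unfolding d_def using that by (rule infdist_le)
  have near: "\<exists>y\<in>C. dist x y < d + 1 / real (Suc n)" for n
  proof (rule ccontr)
    assume "\<not> ?thesis"
    then have "\<forall>y\<in>C. d + 1 / real (Suc n) \<le> dist x y" by force
    then have "d + 1 / real (Suc n) \<le> (INF a\<in>C. dist x a)"
      using C(1) by (intro cINF_greatest) auto
    then have "d + 1 / real (Suc n) \<le> d" unfolding d_def using infdist_notempty[OF C(1)] by simp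
    moreover have "1 / real (Suc n) > 0" by simp
    ultimately show False by linarith
  qed
  then obtain y where y: "\<And>n. y n \<in> C" "\<And>n. dist x (y n) < d + 1 / real (Suc n)"
    by metis
  define e where "e n = (d + 1 / real (Suc n))\<^sup>2 - d\<^sup>2" for n
  have key: "(dist (y m) (y n))\<^sup>2 \<le> 2 * e m + 2 * e n" for m n
  proof -
    define c where "c = (1/2) *\<^sub>R (y m + y n)"
    have "(1/2) *\<^sub>R y m + (1/2) *\<^sub>R y n \<in> C"
      by (rule convexD[OF C(3) y(1) y(1)]) auto
    then have "c \<in> C" unfolding c_def by (simp add: scaleR_add_right)
    then have dc: "d \<le> norm (x - c)" using dle dist_norm by metis
    have p: "(norm ((x - y m) + (x - y n)))\<^sup>2 + (norm ((x - y m) - (x - y n)))\<^sup>2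
       = 2 * (norm (x - y m))\<^sup>2 + 2 * (norm (x - y n))\<^sup>2" by (rule parallelogram)
    have "2 *\<^sub>R (x - c) = (x - y m) + (x - y n)"
      unfolding c_def scaleR_right_diff_distrib scaleR_scaleR scaleR_2 by simp
    then have "(x - y m) + (x - y n) = 2 *\<^sub>R (x - c)" by simp
    then have q: "(norm ((x - y m) + (x - y n)))\<^sup>2 = 4 * (norm (x - c))\<^sup>2"
      by (simp add: power_mult_distrib)
    have r: "(x - y m) - (x - y n) = y n - y m" by simp
    have "(norm (x - c))\<^sup>2 \<ge> d\<^sup>2" using dc d0 by (simp add: power_mono)
    moreover have "(norm (x - y m))\<^sup>2 \<le> (d + 1 / real (Suc m))\<^sup>2"
      using y(2)[of m] by (intro power_mono) (auto simp: dist_norm)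
    moreover have "(norm (x - y n))\<^sup>2 \<le> (d + 1 / real (Suc n))\<^sup>2"
      using y(2)[of n] by (intro power_mono) (auto simp: dist_norm)
    ultimately show ?thesis using p q r unfolding e_def
      by (simp add: dist_norm norm_minus_commute)
  qed
  have "(\<lambda>n. (d + 1 / real (Suc n))\<^sup>2 - d\<^sup>2) \<longlonglongrightarrow> (d + 0)\<^sup>2 - d\<^sup>2"
    by (intro tendsto_intros LIMSEQ_Suc[OF lim_inverse_n'] ) 
  then have e0: "e \<longlonglongrightarrow> 0" unfolding e_def by simp
  have "Cauchy y"
  proof (rule metric_CauchyI)
    fix eps :: real assume "eps > 0"
    then have "eps\<^sup>2 / 4 > 0" by simp
    then obtain M where M0: "\<forall>n\<ge>M. norm (e n - 0) < eps\<^sup>2 / 4"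
      using LIMSEQ_D[OF e0] by blast
    then have M: "\<And>n. n \<ge> M \<Longrightarrow> \<bar>e n\<bar> < eps\<^sup>2 / 4" by simp
    show "\<exists>M. \<forall>m\<ge>M. \<forall>n\<ge>M. dist (y m) (y n) < eps"
    proof (intro exI allI impI)
      fix m n assume "m \<ge> M" "n \<ge> M"
      then have "(dist (y m) (y n))\<^sup>2 < eps\<^sup>2" using key[of m n] M[of m] M[of n] by linarith
      then show "dist (y m) (y n) < eps" using \<open>eps > 0\<close>
        by (meson power2_less_imp_less less_imp_le)
    qed
  qed
  then obtain p where p: "y \<longlonglongrightarrow> p" using convergent_def Cauchy_convergent_iff by blast
  have pC: "p \<in> C" using closed_sequentially[OF C(2)] y(1) p by blast
  have l1: "(\<lambda>n. dist x (y n)) \<longlonglongrightarrow> dist x p" by (intro tendsto_intros p)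
  have l2: "(\<lambda>n. dist x (y n)) \<longlonglongrightarrow> d"
  proof (rule real_tendsto_sandwich[where f="\<lambda>n. d" and h="\<lambda>n. d + 1 / real (Suc n)"])
    show "\<forall>\<^sub>F n in sequentially. d \<le> dist x (y n)" using dle y(1) by auto
    show "\<forall>\<^sub>F n in sequentially. dist x (y n) \<le> d + 1 / real (Suc n)" using y(2) by (intro always_eventually allI less_imp_le) 
    show "(\<lambda>n. d) \<longlonglongrightarrow> d" by simp
    have "(\<lambda>n. d + 1 / real (Suc n)) \<longlonglongrightarrow> d + 0"
      by (intro tendsto_intros LIMSEQ_Suc[OF lim_inverse_n'])
    then show "(\<lambda>n. d + 1 / real (Suc n)) \<longlonglongrightarrow> d" by simp
  qed
  have "dist x p = d" using LIMSEQ_unique[OF l1 l2] .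
  then show ?thesis using pC dle by auto
qed

lemma metric_proj_props:
  fixes C :: "'a::{real_inner,complete_space} set"
  assumes C: "C \<noteq> {}" "closed C" "convex C"
  shows "metric_proj C x \<in> C" "\<And>y. y \<in> C \<Longrightarrow> dist x (metric_proj C x) \<le> dist x y"
proof -
  have "\<exists>p. p \<in> C \<and> (\<forall>y\<in>C. dist x p \<le> dist x y)" using proj_exists[OF C] by blast
  then have "metric_proj C x \<in> C \<and> (\<forall>y\<in>C. dist x (metric_proj C x) \<le> dist x y)"
    unfolding metric_proj_def by (rule someI_ex)
  then show "metric_proj C x \<in> C" "\<And>y. y \<in> C \<Longrightarrow> dist x (metric_proj C x) \<le> dist x y" by auto
qed

lemma proj_vi:
  fixes C :: "'a::real_inner set"
  assumes "convex C" "p \<in> C" "\<And>y. y \<in> C \<Longrightarrow> dist x p \<le> dist x y" "y \<in> C"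
  shows "inner (x - p) (y - p) \<le> 0"
proof (rule ccontr)
  assume "\<not> ?thesis"
  then have a: "inner (x - p) (y - p) > 0" by simp
  define b where "b = (norm (y - p))\<^sup>2"
  have "y \<noteq> p" using a by auto
  then have b0: "b > 0" unfolding b_def by simp
  define t where "t = min 1 (inner (x - p) (y - p) / b)"
  have t0: "t > 0" "t \<le> 1" unfolding t_def using a b0 by auto
  have tb: "t * b \<le> inner (x - p) (y - p)" unfolding t_def using b0
    by (metis min.cobounded2 mult.commute pos_le_divide_eq)
  define q where "q = p + t *\<^sub>R (y - p)"
  have "q = (1 - t) *\<^sub>R p + t *\<^sub>R y" unfolding q_def by (simp add: algebra_simps)
  then have "q \<in> C" using assms(1,2,4) t0 by (simp add: convexD)
  then have "dist x p \<le> dist x q" using assms(3) by blast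
  then have le: "(norm (x - p))\<^sup>2 \<le> (norm (x - q))\<^sup>2" by (simp add: dist_norm power_mono)
  have xq: "x - q = (x - p) - t *\<^sub>R (y - p)" unfolding q_def by simp
  have "(norm (x - q))\<^sup>2 = (norm (x - p))\<^sup>2 - 2 * t * inner (x - p) (y - p) + t * (t * b)"
    unfolding xq power2_norm_eq_inner b_def
    by (simp add: inner_diff_left inner_diff_right inner_commute algebra_simps)
  moreover have "t * (t * b) \<le> t * inner (x - p) (y - p)" using tb t0 by simp
  moreover have "t * inner (x - p) (y - p) > 0" using t0 a by simp
  ultimately show False using le by linarith
qed



lemma quasi_fejer:
  fixes a c e :: "nat \<Rightarrow> real"
  assumes a0: "\<And>n. a n \<ge> 0" and c0: "\<And>n. c n \<ge> 0" and e0: "\<And>n. e n \<ge> 0"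
    and se: "summable e"
    and rec: "\<And>n. n \<ge> N \<Longrightarrow> a (Suc n) \<le> a n - c n + e n"
  shows "convergent a \<and> c \<longlonglongrightarrow> 0"
proof -
  define t where "t n = suminf e - (\<Sum>k<n. e k)" for n
  have t0: "t n \<ge> 0" for n unfolding t_def using sum_le_suminf[OF se, of "{..<n}"] e0 by simp
  have tS: "t (Suc n) = t n - e n" for n unfolding t_def by simp
  have tl: "t \<longlonglongrightarrow> 0"
  proof -
    have "(\<lambda>n. suminf e - (\<Sum>k<n. e k)) \<longlonglongrightarrow> suminf e - suminf e"
      by (intro tendsto_intros summable_LIMSEQ se)
    then show ?thesis unfolding t_def by simp
  qed
  define b where "b n = a n + t n" for n
  have bS: "b (Suc n) \<le> b n - c n" if "n \<ge> N" for n
    using rec[OF that] tS[of n] unfolding b_def by simp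
  have "decseq (\<lambda>k. b (k + N))"
  proof (rule decseq_SucI)
    fix k show "b (Suc k + N) \<le> b (k + N)" using bS[of "k + N"] c0[of "k + N"] by simp
  qed
  moreover have "\<forall>i. 0 \<le> b (i + N)" using a0 t0 unfolding b_def by (simp add: add_nonneg_nonneg)
  ultimately obtain L where L: "(\<lambda>k. b (k + N)) \<longlonglongrightarrow> L" by (rule decseq_convergent)
  then have bL: "b \<longlonglongrightarrow> L" by (rule LIMSEQ_offset)
  have "(\<lambda>n. b n - t n) \<longlonglongrightarrow> L - 0" by (intro tendsto_intros bL tl)
  then have "a \<longlonglongrightarrow> L" unfolding b_def by simp
  then have ca: "convergent a" by (rule convergentI)
  have "(\<lambda>n. b n - b (Suc n)) \<longlonglongrightarrow> L - L"
    by (intro tendsto_intros bL LIMSEQ_Suc)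
  then have db: "(\<lambda>n. b n - b (Suc n)) \<longlonglongrightarrow> 0" by simp
  have "c \<longlonglongrightarrow> 0"
  proof (rule real_tendsto_sandwich[where f="\<lambda>n. 0" and h="\<lambda>n. b n - b (Suc n)"])
    show "\<forall>\<^sub>F n in sequentially. 0 \<le> c n" using c0 by simp
    show "\<forall>\<^sub>F n in sequentially. c n \<le> b n - b (Suc n)"
      unfolding eventually_sequentially using bS by force
    show "(\<lambda>n. 0::real) \<longlonglongrightarrow> 0" by simp
    show "(\<lambda>n. b n - b (Suc n)) \<longlonglongrightarrow> 0" by (rule db)
  qed
  then show ?thesis using ca by simp
qed

lemma sq_convex_bound:
  fixes x y \<nu> :: real
  assumes "0 < \<nu>" "\<nu> < 1"
  shows "(\<nu> * x + y)\<^sup>2 \<le> \<nu> * x\<^sup>2 + y\<^sup>2 / (1 - \<nu>)"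
proof -
  have "(1 - \<nu>) * (\<nu> * x + y)\<^sup>2 + \<nu> * ((1 - \<nu>) * x - y)\<^sup>2 = (1 - \<nu>) * (\<nu> * x\<^sup>2) + y\<^sup>2"
    by (simp add: power2_eq_square algebra_simps)
  moreover have "\<nu> * ((1 - \<nu>) * x - y)\<^sup>2 \<ge> 0" using assms by simp
  moreover have "(1 - \<nu>) * (\<nu> * x\<^sup>2 + y\<^sup>2 / (1 - \<nu>)) = (1 - \<nu>) * (\<nu> * x\<^sup>2) + y\<^sup>2"
    using assms by (simp add: field_simps)
  ultimately have "(1 - \<nu>) * (\<nu> * x + y)\<^sup>2 \<le> (1 - \<nu>) * (\<nu> * x\<^sup>2 + y\<^sup>2 / (1 - \<nu>))"
    by linarith
  then show ?thesis using assms by simp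
qed


theorem lemma4p2:
  fixes C :: "'a::{real_inner, complete_space} set"
    and F :: "'a \<Rightarrow> 'a"
    and z w :: "nat \<Rightarrow> 'a"
    and lam \<xi> :: "nat \<Rightarrow> real"
    and \<mu> :: real
  assumes C: "C \<noteq> {}" "closed C" "convex C"
    and A1: "dual_sol C F \<noteq> {}"
    and A2: "quasimonotone F"
    and A3: "uniformly_continuous_on UNIV F"
    and mu: "0 < \<mu>" "\<mu> < 1"
    and xi: "\<And>n. \<xi> n \<ge> 0" "summable \<xi>"
    and lam1: "lam 1 > 0"
    and w_def: "\<And>n. n \<ge> 1 \<Longrightarrow> w n = metric_proj C (z n - lam n *\<^sub>R F (z n))"
    and z_def: "\<And>n. n \<ge> 1 \<Longrightarrow> z (Suc n) = w n + lam n *\<^sub>R (F (z n) - F (w n))"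
    and lam_def: "\<And>n. n \<ge> 1 \<Longrightarrow> lam (Suc n) =
        (if F (z n) \<noteq> F (w n)
         then min (\<mu> * norm (z n - w n) / norm (F (z n) - F (w n))) (lam n + \<xi> n)
         else lam n + \<xi> n)"
    and nostop: "\<And>n. n \<ge> 1 \<Longrightarrow> z n \<noteq> w n"
  shows "(\<forall>x \<in> dual_sol C F. convergent (\<lambda>n. norm (z n - x)))
    \<and> (\<lambda>n. norm (z n - w n)) \<longlonglongrightarrow> 0
    \<and> (\<lambda>n. norm (z (Suc n) - z n)) \<longlonglongrightarrow> 0"
proof -
  have wC: "w n \<in> C" if "n \<ge> 1" for n using metric_proj_props(1)[OF C] w_def[OF that] by simp
  have wvi: "inner ((z n - lam n *\<^sub>R F (z n)) - w n) (y - w n) \<le> 0" if "n \<ge> 1" "y \<in> C" for n y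
    unfolding w_def[OF that(1)]
    by (rule proj_vi[OF C(3) metric_proj_props(1)[OF C] metric_proj_props(2)[OF C] that(2)])
  define d where "d n = norm (z n - w n)" for n
  define G where "G n = norm (F (z n) - F (w n))" for n
  define \<delta> where "\<delta> n = max 0 (lam n - lam (Suc n))" for n
  have d0: "d n \<ge> 0" for n unfolding d_def by simp
  have G0: "G n \<ge> 0" for n unfolding G_def by simp
  have dpos: "d n > 0" if "n \<ge> 1" for n unfolding d_def using nostop[OF that] by simp
  have lamxi: "lam (Suc n) \<le> lam n + \<xi> n" if "n \<ge> 1" for n
    using lam_def[OF that] by (auto split: if_splits)
  have lampos: "lam n > 0" if "n \<ge> 1" for n
    using that
  proof (induction n rule: nat_induct_at_least)
    case base
    then show ?case using lam1 by simp
  next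
    case (Suc n)
    have "lam n + \<xi> n > 0" using Suc.IH xi(1)[of n] by simp
    moreover have "F (z n) \<noteq> F (w n) \<Longrightarrow> \<mu> * norm (z n - w n) / norm (F (z n) - F (w n)) > 0"
      using mu(1) dpos[OF Suc.hyps] unfolding d_def by simp
    ultimately show ?case using lam_def[OF Suc.hyps] by auto
  qed
  have lamG: "lam (Suc n) * G n \<le> \<mu> * d n" if "n \<ge> 1" for n
  proof (cases "F (z n) = F (w n)")
    case True
    then show ?thesis unfolding G_def using mu d0[of n] by simp
  next
    case False
    then have Gp: "G n > 0" unfolding G_def by simp
    have "lam (Suc n) \<le> \<mu> * d n / G n"
      using lam_def[OF that] False unfolding d_def G_def by simp
    then show ?thesis using Gp by (simp add: pos_le_divide_eq)
  qed
  have \<delta>0: "\<delta> n \<ge> 0" for n unfolding \<delta>_def by simp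
  have \<delta>le: "\<delta> n \<le> lam n - lam (Suc n) + \<xi> n" if "n \<ge> 1" for n
    unfolding \<delta>_def using lamxi[OF that] xi(1)[of n] by simp
  have partial: "(\<Sum>k<N. \<delta> k) \<le> \<delta> 0 + lam 1 - lam N + (\<Sum>k<N. \<xi> k)" if "N \<ge> 1" for N
    using that
  proof (induction N rule: nat_induct_at_least)
    case base
    then show ?case using xi(1)[of 0] by simp
  next
    case (Suc n)
    then show ?case using \<delta>le[OF Suc.hyps] by simp
  qed
  have sumxi: "(\<Sum>k<N. \<xi> k) \<le> suminf \<xi>" for N
    using sum_le_suminf[OF xi(2), of "{..<N}"] xi(1) by simp
  have sxi0: "suminf \<xi> \<ge> 0" using suminf_nonneg[OF xi(2)] xi(1) by simp
  have s\<delta>: "summable \<delta>"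
  proof (rule summableI_nonneg_bounded[where x="\<delta> 0 + lam 1 + suminf \<xi>"])
    show "0 \<le> \<delta> n" for n by (rule \<delta>0)
    fix N
    show "(\<Sum>k<N. \<delta> k) \<le> \<delta> 0 + lam 1 + suminf \<xi>"
    proof (cases "N \<ge> 1")
      case True
      then show ?thesis using partial[OF True] lampos[OF True] sumxi[of N] by linarith
    next
      case False
      then have "N = 0" by simp
      then show ?thesis using \<delta>0[of 0] lam1 sxi0 by simp
    qed
  qed
  have \<delta>lim: "\<delta> \<longlonglongrightarrow> 0" by (rule summable_LIMSEQ_zero[OF s\<delta>])
  have lamb: "lam n \<le> lam 1 + (\<Sum>k<n. \<xi> k)" if "n \<ge> 1" for n
    using that
  proof (induction n rule: nat_induct_at_least)
    case base
    then show ?case using xi(1)[of 0] by simp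
  next
    case (Suc n)
    then show ?case using lamxi[OF Suc.hyps] by simp
  qed
  define Lb where "Lb = lam 1 + suminf \<xi>"
  have lamLb: "lam n \<le> Lb" if "n \<ge> 1" for n using lamb[OF that] sumxi[of n] unfolding Lb_def by linarith
  obtain A B where AB: "A \<ge> 0" "B > 0" "\<And>x y. norm (F x - F y) \<le> A + B * norm (x - y)"
    using ucont_linear_bound[OF A3] by blast
  have Gb: "G n \<le> A + B * d n" for n unfolding G_def d_def by (rule AB(3))
  have lamGn: "lam n * G n \<le> \<mu> * d n + \<delta> n * G n" if "n \<ge> 1" for n
  proof -
    have "lam n \<le> lam (Suc n) + \<delta> n" unfolding \<delta>_def by simp
    then have "lam n * G n \<le> (lam (Suc n) + \<delta> n) * G n" using G0[of n] by (rule mult_right_mono)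
    then show ?thesis using lamG[OF that] by (simp add: algebra_simps)
  qed
  define \<nu> where "\<nu> = (1 + \<mu>) / 2"
  have \<nu>: "0 < \<nu>" "\<nu> < 1" unfolding \<nu>_def using mu by auto
  define r where "r = min 1 ((1 - \<mu>) / (2 * B))"
  have r0: "r > 0" unfolding r_def using mu AB(2) by simp
  obtain N0 where N0: "\<forall>n\<ge>N0. norm (\<delta> n - 0) < r" using LIMSEQ_D[OF \<delta>lim r0] by blast
  define N where "N = max 1 N0"
  have N1: "N \<ge> 1" unfolding N_def by simp
  have \<delta>small: "\<delta> n \<le> 1" "B * \<delta> n \<le> (1 - \<mu>) / 2" if "n \<ge> N" for n
  proof -
    have "\<delta> n < r" using N0 that \<delta>0[of n] unfolding N_def by auto
    then have h: "\<delta> n \<le> 1" "\<delta> n \<le> (1 - \<mu>) / (2 * B)" unfolding r_def by auto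
    show "\<delta> n \<le> 1" by (rule h(1))
    show "B * \<delta> n \<le> (1 - \<mu>) / 2" using h(2) AB(2) by (simp add: field_simps)
  qed
  define K where "K = A\<^sup>2 / (1 - \<nu>)"
  have key2: "(lam n * G n)\<^sup>2 \<le> \<nu> * (d n)\<^sup>2 + K * \<delta> n" if "n \<ge> N" for n
  proof -
    have n1: "n \<ge> 1" using that N1 by simp
    have "\<delta> n * G n \<le> \<delta> n * (A + B * d n)" using Gb[of n] \<delta>0[of n] by (rule mult_left_mono)
    also have "\<dots> = A * \<delta> n + (B * \<delta> n) * d n" by (simp add: algebra_simps)
    also have "\<dots> \<le> A * \<delta> n + ((1 - \<mu>) / 2) * d n"
      using mult_right_mono[OF \<delta>small(2)[OF that] d0[of n]] by simp
    finally have "\<delta> n * G n \<le> A * \<delta> n + ((1 - \<mu>) / 2) * d n" .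
    moreover have "\<nu> * d n = \<mu> * d n + ((1 - \<mu>) / 2) * d n" unfolding \<nu>_def by (simp add: field_simps)
    ultimately have up: "lam n * G n \<le> \<nu> * d n + A * \<delta> n"
      using lamGn[OF n1] by linarith
    have lo: "0 \<le> lam n * G n" using lampos[OF n1] G0[of n] by simp
    have "(lam n * G n)\<^sup>2 \<le> (\<nu> * d n + A * \<delta> n)\<^sup>2" using up lo by (simp add: power_mono)
    also have "\<dots> \<le> \<nu> * (d n)\<^sup>2 + (A * \<delta> n)\<^sup>2 / (1 - \<nu>)" by (rule sq_convex_bound[OF \<nu>])
    also have "(A * \<delta> n)\<^sup>2 \<le> A\<^sup>2 * \<delta> n"
    proof -
      have "\<delta> n * \<delta> n \<le> \<delta> n * 1" using \<delta>small(1)[OF that] \<delta>0[of n] by (rule mult_left_mono)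
      then have "(\<delta> n)\<^sup>2 \<le> \<delta> n" by (simp add: power2_eq_square)
      then show ?thesis by (simp add: power_mult_distrib mult_left_mono)
    qed
    then have "(A * \<delta> n)\<^sup>2 / (1 - \<nu>) \<le> K * \<delta> n" unfolding K_def using \<nu>
      by (simp add: divide_right_mono)
    finally show ?thesis by simp
  qed
  have fejer: "(norm (z (Suc n) - p))\<^sup>2 \<le> (norm (z n - p))\<^sup>2 - (d n)\<^sup>2 + (lam n * G n)\<^sup>2"
    if "n \<ge> 1" "p \<in> dual_sol C F" for n p
  proof -
    have pC: "p \<in> C" and pD: "\<And>v. v \<in> C \<Longrightarrow> inner (F v) (v - p) \<ge> 0"
      using that(2) unfolding dual_sol_def by auto
    show ?thesis
      unfolding z_def[OF that(1)] d_def G_def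
      by (rule fejer_alg[OF wvi[OF that(1) pC] pD[OF wC[OF that(1)]] less_imp_le[OF lampos[OF that(1)]]])
  qed
  have main: "convergent (\<lambda>n. (norm (z n - p))\<^sup>2) \<and> (\<lambda>n. (1 - \<nu>) * (d n)\<^sup>2) \<longlonglongrightarrow> 0"
    if "p \<in> dual_sol C F" for p
  proof (rule quasi_fejer[where N=N])
    show "0 \<le> (norm (z n - p))\<^sup>2" for n by simp
    show "0 \<le> (1 - \<nu>) * (d n)\<^sup>2" for n using \<nu> by simp
    show "0 \<le> K * \<delta> n" for n unfolding K_def using \<nu> \<delta>0[of n] by simp
    show "summable (\<lambda>n. K * \<delta> n)" using s\<delta> by (rule summable_mult)
    fix n assume "n \<ge> N"
    then show "(norm (z (Suc n) - p))\<^sup>2 \<le> (norm (z n - p))\<^sup>2 - (1 - \<nu>) * (d n)\<^sup>2 + K * \<delta> n"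
      using fejer[of n p, OF _ that] key2[of n] N1 by (simp add: algebra_simps)
  qed
  have part1: "\<forall>x \<in> dual_sol C F. convergent (\<lambda>n. norm (z n - x))"
  proof
    fix x assume "x \<in> dual_sol C F"
    then obtain L where "(\<lambda>n. (norm (z n - x))\<^sup>2) \<longlonglongrightarrow> L" using main convergent_def by blast
    then have "(\<lambda>n. sqrt ((norm (z n - x))\<^sup>2)) \<longlonglongrightarrow> sqrt L" by (rule tendsto_real_sqrt)
    then show "convergent (\<lambda>n. norm (z n - x))" by (simp add: convergentI)
  qed
  obtain p where p: "p \<in> dual_sol C F" using A1 by blast
  have "(\<lambda>n. (1 - \<nu>) * (d n)\<^sup>2) \<longlonglongrightarrow> 0" using main[OF p] by simp
  then have "(\<lambda>n. sqrt (((1 - \<nu>) * (d n)\<^sup>2) / (1 - \<nu>))) \<longlonglongrightarrow> sqrt (0 / (1 - \<nu>))"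
    using \<nu>(2) by (intro tendsto_intros) auto
  moreover have "sqrt (((1 - \<nu>) * (d n)\<^sup>2) / (1 - \<nu>)) = d n" for n using \<nu> d0[of n] by simp
  ultimately have dlim: "d \<longlonglongrightarrow> 0" by simp
  have Glim: "G \<longlonglongrightarrow> 0"
  proof (rule LIMSEQ_I)
    fix eps :: real assume "eps > 0"
    then obtain s where s: "s > 0" "\<And>x y. dist x y < s \<Longrightarrow> dist (F x) (F y) < eps"
      using A3 unfolding isUCont_def by blast
    obtain M where M: "\<forall>n\<ge>M. norm (d n - 0) < s" using LIMSEQ_D[OF dlim s(1)] by blast
    show "\<exists>no. \<forall>n\<ge>no. norm (G n - 0) < eps"
    proof (intro exI allI impI)
      fix n assume "n \<ge> M"
      then have "dist (z n) (w n) < s" using M d0[of n] unfolding d_def by (simp add: dist_norm)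
      then have "dist (F (z n)) (F (w n)) < eps" by (rule s(2))
      then show "norm (G n - 0) < eps" unfolding G_def by (simp add: dist_norm)
    qed
  qed
  have zlim: "(\<lambda>n. norm (z (Suc n) - z n)) \<longlonglongrightarrow> 0"
  proof (rule real_tendsto_sandwich[where f="\<lambda>n. 0" and h="\<lambda>n. d n + Lb * G n"])
    show "\<forall>\<^sub>F n in sequentially. 0 \<le> norm (z (Suc n) - z n)" by simp
    have "norm (z (Suc n) - z n) \<le> d n + Lb * G n" if "n \<ge> 1" for n
    proof -
      have "z (Suc n) - z n = (w n - z n) + lam n *\<^sub>R (F (z n) - F (w n))"
        using z_def[OF that] by simp
      then have "norm (z (Suc n) - z n) \<le> norm (w n - z n) + norm (lam n *\<^sub>R (F (z n) - F (w n)))"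
        by (metis norm_triangle_ineq)
      also have "norm (w n - z n) = d n" unfolding d_def by (simp add: norm_minus_commute)
      also have "norm (lam n *\<^sub>R (F (z n) - F (w n))) = lam n * G n"
        unfolding G_def using lampos[OF that] by simp
      also have "lam n * G n \<le> Lb * G n" using lamLb[OF that] G0[of n] by (rule mult_right_mono)
      finally show ?thesis by simp
    qed
    then show "\<forall>\<^sub>F n in sequentially. norm (z (Suc n) - z n) \<le> d n + Lb * G n"
      unfolding eventually_sequentially by blast
    show "(\<lambda>n. 0::real) \<longlonglongrightarrow> 0" by simp
    have "(\<lambda>n. d n + Lb * G n) \<longlonglongrightarrow> 0 + Lb * 0" by (intro tendsto_intros dlim Glim)
    then show "(\<lambda>n. d n + Lb * G n) \<longlonglongrightarrow> 0" by simp
  qed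
  show ?thesis using part1 dlim zlim unfolding d_def by simp
qed

end
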